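(* Let $m\le n$, $K\in\{0,\ldots,m-1\}$, $\gamma>0$, and let $\mathcal{C}\subset\mathbb{R}^{m\times n}$ satisfy condition (C1) and $-X\in\mathcal F(X;\mathcal C)$ for every $X\in\mathcal C$. Let $b\in\mathbb{R}^p$, $A_1,\ldots,A_p\in\mathbb{R}^{m\times n}$, $\mathcal{A}(X)=(A_1\bullet X,\ldots,A_p\bullet X)^\top$, and $f(X)=\frac12\|\mathcal A(X)-b\|_2^2$. Then every d-stationary point $X^*$ of $\min_X f(X)+\gamma\mathcal{T}_K(X)+\delta_{\mathcal C}(X)$ satisfies $\mathcal{T}_K(X^* )=0$ provided $$\gamma>\|\mathcal{A}^*\|_{2,2}\|b\|_2,$$ where $\mathcal{A}^*(y)=\sum_{i=1}^py_iA_i$ is the adjoint of $\mathcal A$ and $\|\mathcal{A}^*\|_{2,2}=\sup_{\|y\|_2=1}\|\mathcal{A}^*(y)\|_2$ with $\|\cdot\|_2$ the spectral norm on matrices.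
   Context: $X\bullet Y=\mathrm{tr}(X^\top Y)$. $\mathcal{T}_K(X)=\sum_{i=K+1}^{\min\{m,n\}}\sigma_i(X)$ (singular values in decreasing order). $\delta_{\mathcal C}$ = indicator of $\mathcal C$. Feasible cone $\mathcal{F}(X;\mathcal{C})=\{D\mid \exists\varsigma'>0:\ X+\varsigma D\in\mathcal{C}\ \forall\varsigma\in(0,\varsigma')\}$. Condition (C1): every $X\in\mathcal C$ has an SVD $X=U[\mathrm{diag}(\sigma_1(X),\ldots,\sigma_m(X)),0]V^\top$ with $-U[\mathrm{diag}(0,\ldots,0,\sigma_{K+1}(X),\ldots,\sigma_m(X)),0]V^\top\in\mathcal{F}(X;\mathcal C)$. $X^*\in\mathcal C$ is d-stationary if the objective's directional derivative at $X^*$ is $\ge0$ for all $D\in\mathcal F(X^*;\mathcal C)$. *)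

theory Defs
  imports Complex_Main "Jordan_Normal_Form.Matrix"
begin

(* Real m x n matrices are Jordan_Normal_Form matrices "real mat" in carrier_mat m n.
   Indices are 0-based: the paper's sigma_i is svals X (i-1). *)

definition mat_trace :: "real mat \<Rightarrow> real" where
  "mat_trace M = (\<Sum>i<dim_row M. M $$ (i, i))"

definition mat_inner :: "real mat \<Rightarrow> real mat \<Rightarrow> real" where
  "mat_inner X Y = mat_trace (transpose_mat X * Y)"

definition rect_diag :: "nat \<Rightarrow> nat \<Rightarrow> (nat \<Rightarrow> real) \<Rightarrow> real mat" where
  "rect_diag m n s = mat m n (\<lambda>(i, j). if i = j then s i else 0)"

definition orthogonal_mat :: "nat \<Rightarrow> real mat \<Rightarrow> bool" where
  "orthogonal_mat k U \<longleftrightarrow> U \<in> carrier_mat k k \<and> transpose_mat U * U = 1\<^sub>m k"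

definition is_svd :: "real mat \<Rightarrow> real mat \<Rightarrow> (nat \<Rightarrow> real) \<Rightarrow> real mat \<Rightarrow> bool" where
  "is_svd X U s V \<longleftrightarrow>
     orthogonal_mat (dim_row X) U \<and> orthogonal_mat (dim_col X) V \<and>
     (\<forall>i<min (dim_row X) (dim_col X). 0 \<le> s i) \<and>
     (\<forall>i j. i \<le> j \<longrightarrow> j < min (dim_row X) (dim_col X) \<longrightarrow> s j \<le> s i) \<and>
     (\<forall>i. min (dim_row X) (dim_col X) \<le> i \<longrightarrow> s i = 0) \<and>
     X = U * rect_diag (dim_row X) (dim_col X) s * transpose_mat V"

definition svals :: "real mat \<Rightarrow> nat \<Rightarrow> real" where
  "svals X = (THE s. \<exists>U V. is_svd X U s V)"

(* T_K(X) = sum_{i=K+1}^{min m n} sigma_i(X) *)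
definition trunc_sv :: "nat \<Rightarrow> real mat \<Rightarrow> real" where
  "trunc_sv K X = (\<Sum>i\<in>{K..<min (dim_row X) (dim_col X)}. svals X i)"

definition feasible_cone :: "real mat \<Rightarrow> real mat set \<Rightarrow> real mat set" where
  "feasible_cone X C = {D. D \<in> carrier_mat (dim_row X) (dim_col X) \<and>
     (\<exists>s'>0. \<forall>s. 0 < s \<and> s < s' \<longrightarrow> X + s \<cdot>\<^sub>m D \<in> C)}"

definition cond_C1 :: "nat \<Rightarrow> real mat set \<Rightarrow> bool" where
  "cond_C1 K C \<longleftrightarrow> (\<forall>X\<in>C. \<exists>U V. is_svd X U (svals X) V \<and>
     - (U * rect_diag (dim_row X) (dim_col X) (\<lambda>i. if K \<le> i then svals X i else 0)
          * transpose_mat V) \<in> feasible_cone X C)"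

definition dir_deriv :: "(real mat \<Rightarrow> real) \<Rightarrow> real mat \<Rightarrow> real mat \<Rightarrow> real" where
  "dir_deriv F X D = Lim (at_right 0) (\<lambda>t. (F (X + t \<cdot>\<^sub>m D) - F X) / t)"

(* d-stationarity of min F(X) + delta_C(X): the indicator vanishes along feasible
   directions for small step sizes, so only F contributes. *)
definition d_stationary :: "(real mat \<Rightarrow> real) \<Rightarrow> real mat set \<Rightarrow> real mat \<Rightarrow> bool" where
  "d_stationary F C X \<longleftrightarrow> X \<in> C \<and> (\<forall>D\<in>feasible_cone X C. 0 \<le> dir_deriv F X D)"

definition vnorm :: "nat \<Rightarrow> (nat \<Rightarrow> real) \<Rightarrow> real" where
  "vnorm p y = sqrt (\<Sum>i<p. (y i)\<^sup>2)"

definition spec_norm :: "real mat \<Rightarrow> real" where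
  "spec_norm M = Sup {vnorm (dim_row M) (\<lambda>r. \<Sum>c<dim_col M. M $$ (r, c) * v c) | v.
                       vnorm (dim_col M) v = 1}"

definition lin_map :: "nat \<Rightarrow> (nat \<Rightarrow> real mat) \<Rightarrow> real mat \<Rightarrow> nat \<Rightarrow> real" where
  "lin_map p A X = (\<lambda>i. if i < p then mat_inner (A i) X else 0)"

definition adj_map :: "nat \<Rightarrow> nat \<Rightarrow> nat \<Rightarrow> (nat \<Rightarrow> real mat) \<Rightarrow> (nat \<Rightarrow> real) \<Rightarrow> real mat" where
  "adj_map m n p A y = mat m n (\<lambda>(r, c). \<Sum>i<p. y i * A i $$ (r, c))"

definition adj_norm :: "nat \<Rightarrow> nat \<Rightarrow> nat \<Rightarrow> (nat \<Rightarrow> real mat) \<Rightarrow> real" where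
  "adj_norm m n p A = Sup {spec_norm (adj_map m n p A y) | y. vnorm p y = 1}"

definition lsq :: "nat \<Rightarrow> (nat \<Rightarrow> real mat) \<Rightarrow> (nat \<Rightarrow> real) \<Rightarrow> real mat \<Rightarrow> real" where
  "lsq p A b X = (1/2) * (\<Sum>i<p. (mat_inner (A i) X - b i)\<^sup>2)"

end

theory Submission imports Defs "Jordan_Normal_Form.Char_Poly" "HOL-Analysis.L2_Norm"
begin

lemma order_prod_linear:
  "order a (prod_list (map (\<lambda>x. [:-x, 1:]) (xs :: real list))) = count (mset xs) a"
proof (induction xs)
  case Nil thus ?case by (simp add: order_0I)
next
  case (Cons x xs)
  have nz: "prod_list (map (\<lambda>x. [:-x, 1:]) (xs :: real list)) \<noteq> 0"
    by (auto simp: prod_list_zero_iff)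
  have o1: "order a [:-x, 1:] = (if a = x then 1 else 0)"
  proof (cases "a = x")
    case True thus ?thesis using order_power_n_n[of a 1] by simp
  next
    case False thus ?thesis using order_0I[of "[:-x, 1:]" a] by simp
  qed
  have "order a (prod_list (map (\<lambda>x. [:-x, 1:]) (x # xs))) =
        order a [:-x, 1:] + order a (prod_list (map (\<lambda>x. [:-x, 1:]) xs))"
  proof -
    have h: "[:-x, 1:] \<noteq> (0::real poly)" by simp
    have "[:-x, 1:] * prod_list (map (\<lambda>x. [:-x, 1:]) xs) \<noteq> 0" using nz h no_zero_divisors by blast
    from order_mult[OF this, of a] show ?thesis by simp
  qed
  thus ?case using Cons o1 by auto
qed

lemma sorted_mset_eq: "mset xs = mset ys \<Longrightarrow> sorted xs \<Longrightarrow> sorted ys \<Longrightarrow> xs = ys"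
  by (metis properties_for_sort sorted_sort_id)

lemma rect_diag_carrier[simp]: "rect_diag m n s \<in> carrier_mat m n"
  by (simp add: rect_diag_def)

lemma rect_diag_index[simp]: "i < m \<Longrightarrow> j < n \<Longrightarrow> rect_diag m n s $$ (i, j) = (if i = j then s i else 0)"
  by (simp add: rect_diag_def)

lemma orth_facts:
  assumes "orthogonal_mat k U"
  shows "U \<in> carrier_mat k k" "transpose_mat U * U = 1\<^sub>m k" "U * transpose_mat U = 1\<^sub>m k"
proof -
  show c: "U \<in> carrier_mat k k" using assms by (simp add: orthogonal_mat_def)
  show e: "transpose_mat U * U = 1\<^sub>m k" using assms by (simp add: orthogonal_mat_def)
  show "U * transpose_mat U = 1\<^sub>m k"
    by (rule mat_mult_left_right_inverse[OF _ c e]) (use c in simp)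
qed

lemma RRt_index:
  assumes "m \<le> n" "i < m" "j < m"
  shows "(rect_diag m n s * transpose_mat (rect_diag m n s)) $$ (i, j) = (if i = j then (s i)^2 else 0)"
proof -
  have "(rect_diag m n s * transpose_mat (rect_diag m n s)) $$ (i, j)
      = (\<Sum>k<n. (if i = k then s i else 0) * (if j = k then s j else 0))"
    using assms by (simp add: scalar_prod_def lessThan_atLeast0 rect_diag_def)
  also have "\<dots> = (\<Sum>k<n. if k = i then (if j = i then s i * s j else 0) else 0)"
    by (rule sum.cong) auto
  also have "\<dots> = (if i = j then (s i)^2 else 0)"
    using assms by (simp add: power2_eq_square)
  finally show ?thesis .
qed

lemma svd_XXt:
  assumes svd: "is_svd X U s V" and X: "X \<in> carrier_mat m n"
  shows "X * transpose_mat X = U * (rect_diag m n s * transpose_mat (rect_diag m n s)) * transpose_mat U"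
proof -
  have o: "orthogonal_mat m U" "orthogonal_mat n V" and Xe: "X = U * rect_diag m n s * transpose_mat V"
    using svd X unfolding is_svd_def by auto
  note U = orth_facts[OF o(1)] and V = orth_facts[OF o(2)]
  define R where "R = rect_diag m n s"
  have R: "R \<in> carrier_mat m n" by (simp add: R_def)
  have UR: "U * R \<in> carrier_mat m n" using U R by auto
  have tX: "transpose_mat X = V * (transpose_mat R * transpose_mat U)"
    unfolding Xe R_def[symmetric]
    using transpose_mult[OF UR, of "transpose_mat V" n] transpose_mult[OF U(1) R] V(1) by simp
  have "X * transpose_mat X = (U * R * transpose_mat V) * (V * (transpose_mat R * transpose_mat U))"
    unfolding tX unfolding Xe R_def ..
  also have "\<dots> = (U * R * transpose_mat V * V) * (transpose_mat R * transpose_mat U)"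
    using U V R by (subst assoc_mult_mat[of _ m n _ n _ m]) auto
  also have "U * R * transpose_mat V * V = U * R * (transpose_mat V * V)"
    using U V R by (subst assoc_mult_mat[of _ m n _ n _ n]) auto
  also have "\<dots> = U * R" using V UR by (simp add: right_mult_one_mat)
  also have "U * R * (transpose_mat R * transpose_mat U) = U * R * transpose_mat R * transpose_mat U"
    using U R by (subst assoc_mult_mat[of _ m n _ m _ m]) auto
  also have "\<dots> = U * (R * transpose_mat R) * transpose_mat U"
    using U R by (subst assoc_mult_mat[of _ m m _ n _ m]) auto
  finally show ?thesis unfolding R_def .
qed

lemma svd_char_poly:
  assumes svd: "is_svd X U s V" and X: "X \<in> carrier_mat m n" and mn: "m \<le> n"
  shows "char_poly (X * transpose_mat X) = prod_list (map (\<lambda>x. [:-x, 1:]) (map (\<lambda>i. (s i)^2) [0..<m]))"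
proof -
  have o: "orthogonal_mat m U" using svd X unfolding is_svd_def by auto
  note U = orth_facts[OF o]
  define D where "D = rect_diag m n s * transpose_mat (rect_diag m n s)"
  have D: "D \<in> carrier_mat m m" unfolding D_def by (rule mult_carrier_mat[of _ m n]) auto
  have "similar_mat (X * transpose_mat X) D"
    using U D X by (intro similar_matI[of _ _ U "transpose_mat U" m]) (auto simp: svd_XXt[OF svd X] D_def)
  hence "char_poly (X * transpose_mat X) = char_poly D" by (rule char_poly_similar)
  also have "\<dots> = prod_list (map (\<lambda>x. [:-x, 1:]) (diag_mat D))"
  proof (rule char_poly_upper_triangular[OF D])
    show "upper_triangular D" unfolding upper_triangular_def
      using D mn by (auto simp: D_def RRt_index simp del: index_mult_mat)
  qed
  also have "diag_mat D = map (\<lambda>i. (s i)^2) [0..<m]"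
    using D mn by (auto simp: diag_mat_def D_def RRt_index simp del: index_mult_mat)
  finally show ?thesis .
qed

lemma svd_props:
  assumes "is_svd X U s V" and X: "X \<in> carrier_mat m n" and mn: "m \<le> n"
  shows "(\<forall>i<m. 0 \<le> s i) \<and> (\<forall>i j. i \<le> j \<longrightarrow> j < m \<longrightarrow> s j \<le> s i) \<and> (\<forall>i\<ge>m. s i = 0)
    \<and> orthogonal_mat m U \<and> orthogonal_mat n V \<and> X = U * rect_diag m n s * transpose_mat V"
proof -
  have dims: "dim_row X = m" "dim_col X = n" "min m n = m" using X mn by auto
  show ?thesis using assms(1)[unfolded is_svd_def dims] by (elim conjE, intro conjI) assumption+
qed

lemma svd_unique:
  assumes s1: "is_svd X U s V" and s2: "is_svd X U' s' V'"
    and X: "X \<in> carrier_mat m n" and mn: "m \<le> n"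
  shows "s = s'"
proof -
  let ?L = "map (\<lambda>i. (s i)^2) [0..<m]" and ?L' = "map (\<lambda>i. (s' i)^2) [0..<m]"
  have "prod_list (map (\<lambda>x. [:-x, 1:]) ?L) = prod_list (map (\<lambda>x. [:-x, 1:]) ?L')"
    using svd_char_poly[OF s1 X mn] svd_char_poly[OF s2 X mn] by simp
  hence "mset ?L = mset ?L'"
    by (metis multiset_eq_iff order_prod_linear)
  hence ms: "mset (rev ?L) = mset (rev ?L')" by simp
  have dims: "dim_row X = m" "dim_col X = n" "min m n = m" using X mn by auto
  have sorted: "sorted (rev (map (\<lambda>i. (t i)^2) [0..<m]))"
    if svd: "is_svd X W t Z" for W t Z
  proof -
    have nn: "\<forall>i<m. 0 \<le> t i" and dec: "\<forall>i j. i \<le> j \<longrightarrow> j < m \<longrightarrow> t j \<le> t i"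
      using svd dims unfolding is_svd_def by auto
    show ?thesis
    proof (rule sorted_iff_nth_mono[THEN iffD2], intro allI impI)
      fix i j assume ij: "i \<le> j" "j < length (rev (map (\<lambda>i. (t i)^2) [0..<m]))"
      hence "m - Suc j \<le> m - Suc i" "m - Suc i < m" by auto
      hence "t (m - Suc i) \<le> t (m - Suc j)" "0 \<le> t (m - Suc i)" using dec nn by (simp, auto)
      thus "rev (map (\<lambda>i. (t i)^2) [0..<m]) ! i \<le> rev (map (\<lambda>i. (t i)^2) [0..<m]) ! j"
        using ij by (simp add: rev_nth power_mono)
    qed
  qed
  have "rev ?L = rev ?L'" using sorted_mset_eq[OF ms sorted[OF s1] sorted[OF s2]] .
  hence L: "?L = ?L'" by simp
  show ?thesis
  proof
    fix i
    show "s i = s' i"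
    proof (cases "i < m")
      case True
      have "(s i)^2 = (s' i)^2" using L True by auto
      moreover have "0 \<le> s i" "0 \<le> s' i" using svd_props[OF s1 X mn] svd_props[OF s2 X mn] True by auto
      ultimately show ?thesis by (simp add: power2_eq_iff_nonneg)
    next
      case False
      thus ?thesis using svd_props[OF s1 X mn] svd_props[OF s2 X mn] by auto
    qed
  qed
qed

lemma svals_eq:
  assumes "is_svd X U s V" and "X \<in> carrier_mat m n" and "m \<le> n"
  shows "svals X = s"
  unfolding svals_def
proof (rule the_equality)
  show "\<exists>U V. is_svd X U s V" using assms by blast
  fix t assume "\<exists>U V. is_svd X U t V"
  then obtain U' V' where "is_svd X U' t V'" by blast
  thus "t = s" using svd_unique assms by blast
qed

lemma mat_inner_eq:
  assumes "M \<in> carrier_mat m n" "Y \<in> carrier_mat m n"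
  shows "mat_inner M Y = (\<Sum>c<n. \<Sum>r<m. M $$ (r, c) * Y $$ (r, c))"
  using assms unfolding mat_inner_def mat_trace_def
  by (auto simp: scalar_prod_def lessThan_atLeast0 intro!: sum.cong)

lemma svd_entry:
  assumes U: "U \<in> carrier_mat m m" and V: "V \<in> carrier_mat n n" and mn: "m \<le> n"
    and r: "r < m" and c: "c < n"
  shows "(U * rect_diag m n a * transpose_mat V) $$ (r, c) = (\<Sum>k<m. U $$ (r, k) * a k * V $$ (c, k))"
proof -
  have "(U * rect_diag m n a * transpose_mat V) $$ (r, c)
     = (\<Sum>j<n. (\<Sum>k<m. U $$ (r, k) * (if k = j then a k else 0)) * V $$ (c, j))"
    using U V r c by (simp add: scalar_prod_def lessThan_atLeast0 rect_diag_def)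
  also have "\<dots> = (\<Sum>k<m. \<Sum>j<n. U $$ (r, k) * (if k = j then a k else 0) * V $$ (c, j))"
    by (simp add: sum_distrib_right sum.swap[of _ "{..<n}"])
  also have "\<dots> = (\<Sum>k<m. \<Sum>j<n. if j = k then U $$ (r, k) * a k * V $$ (c, k) else 0)"
    by (intro sum.cong refl) auto
  also have "\<dots> = (\<Sum>k<m. U $$ (r, k) * a k * V $$ (c, k))"
    using mn by (intro sum.cong refl) auto
  finally show ?thesis .
qed

lemma svd_mat_carrier:
  assumes U: "U \<in> carrier_mat m m" and V: "V \<in> carrier_mat n n"
  shows "U * rect_diag m n a * transpose_mat V \<in> carrier_mat m n"
  using U V by auto

lemma svd_is_svd:
  assumes U: "orthogonal_mat m U" and V: "orthogonal_mat n V" and mn: "m \<le> n"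
    and nn: "\<forall>i<m. 0 \<le> a i" and dec: "\<forall>i j. i \<le> j \<longrightarrow> j < m \<longrightarrow> a j \<le> a i"
    and z: "\<forall>i\<ge>m. a i = 0"
  shows "is_svd (U * rect_diag m n a * transpose_mat V) U a V"
proof -
  have c: "U * rect_diag m n a * transpose_mat V \<in> carrier_mat m n"
    using orth_facts(1)[OF U] orth_facts(1)[OF V] by auto
  hence d: "dim_row (U * rect_diag m n a * transpose_mat V) = m"
     "dim_col (U * rect_diag m n a * transpose_mat V) = n" "min m n = m" using mn by auto
  show ?thesis unfolding is_svd_def d using U V nn dec z by auto
qed

lemma unit_vec_bound:
  assumes "vnorm n v = 1" "c < n"
  shows "\<bar>v c\<bar> \<le> 1"
proof -
  have "(v c)^2 \<le> (\<Sum>i<n. (v i)^2)" using assms(2) by (intro member_le_sum) auto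
  hence "sqrt ((v c)^2) \<le> vnorm n v" unfolding vnorm_def by (rule real_sqrt_le_mono)
  thus ?thesis using assms(1) by simp
qed

lemma vnorm_L2: "vnorm n v = L2_set v {..<n}"
  by (simp add: vnorm_def L2_set_def)

lemma matvec_bound:
  assumes "vnorm (dim_col M) v = 1"
  shows "vnorm (dim_row M) (\<lambda>r. \<Sum>c<dim_col M. M $$ (r, c) * v c) \<le> (\<Sum>r<dim_row M. \<Sum>c<dim_col M. \<bar>M $$ (r, c)\<bar>)"
proof -
  have "vnorm (dim_row M) (\<lambda>r. \<Sum>c<dim_col M. M $$ (r, c) * v c)
      \<le> (\<Sum>r<dim_row M. \<bar>\<Sum>c<dim_col M. M $$ (r, c) * v c\<bar>)"
    unfolding vnorm_L2 by (rule L2_set_le_sum_abs)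
  also have "\<dots> \<le> (\<Sum>r<dim_row M. \<Sum>c<dim_col M. \<bar>M $$ (r, c)\<bar>)"
  proof (intro sum_mono)
    fix r
    have "\<bar>\<Sum>c<dim_col M. M $$ (r, c) * v c\<bar> \<le> (\<Sum>c<dim_col M. \<bar>M $$ (r, c) * v c\<bar>)"
      by (rule sum_abs)
    also have "\<dots> \<le> (\<Sum>c<dim_col M. \<bar>M $$ (r, c)\<bar>)"
    proof (intro sum_mono)
      fix c assume "c \<in> {..<dim_col M}"
      hence "\<bar>v c\<bar> \<le> 1" using unit_vec_bound[OF assms] by auto
      thus "\<bar>M $$ (r, c) * v c\<bar> \<le> \<bar>M $$ (r, c)\<bar>"
        by (simp add: abs_mult mult_left_le)
    qed
    finally show "\<bar>\<Sum>c<dim_col M. M $$ (r, c) * v c\<bar> \<le> (\<Sum>c<dim_col M. \<bar>M $$ (r, c)\<bar>)" .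
  qed
  finally show ?thesis .
qed

lemma spec_norm_upper:
  assumes "vnorm (dim_col M) v = 1"
  shows "vnorm (dim_row M) (\<lambda>r. \<Sum>c<dim_col M. M $$ (r, c) * v c) \<le> spec_norm M"
  unfolding spec_norm_def
proof (rule cSup_upper)
  show "bdd_above {vnorm (dim_row M) (\<lambda>r. \<Sum>c<dim_col M. M $$ (r, c) * v c) | v. vnorm (dim_col M) v = 1}"
    using matvec_bound by (intro bdd_aboveI[where M = "\<Sum>r<dim_row M. \<Sum>c<dim_col M. \<bar>M $$ (r, c)\<bar>"]) blast
qed (use assms in blast)

lemma spec_norm_le:
  assumes "0 < dim_col M"
  shows "spec_norm M \<le> (\<Sum>r<dim_row M. \<Sum>c<dim_col M. \<bar>M $$ (r, c)\<bar>)"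
  unfolding spec_norm_def
proof (rule cSup_least)
  let ?v = "\<lambda>c::nat. if c = 0 then 1 else (0::real)"
  have "vnorm (dim_col M) ?v = 1" unfolding vnorm_def using assms
    by (subst sum.remove[of _ 0]) auto
  thus "{vnorm (dim_row M) (\<lambda>r. \<Sum>c<dim_col M. M $$ (r, c) * v c) | v. vnorm (dim_col M) v = 1} \<noteq> {}"
    by blast
qed (use matvec_bound in blast)

lemma adj_norm_upper:
  assumes A: "\<forall>i<p. A i \<in> carrier_mat m n" and n: "0 < n" and y: "vnorm p y = 1"
  shows "spec_norm (adj_map m n p A y) \<le> adj_norm m n p A"
  unfolding adj_norm_def
proof (rule cSup_upper)
  let ?B = "\<Sum>r<m. \<Sum>c<n. \<Sum>i<p. \<bar>A i $$ (r, c)\<bar>"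
  have "spec_norm (adj_map m n p A z) \<le> ?B" if z: "vnorm p z = 1" for z
  proof -
    have "spec_norm (adj_map m n p A z) \<le> (\<Sum>r<m. \<Sum>c<n. \<bar>adj_map m n p A z $$ (r, c)\<bar>)"
      using spec_norm_le[of "adj_map m n p A z"] n by (simp add: adj_map_def)
    also have "\<dots> \<le> ?B"
    proof (intro sum_mono)
      fix r c assume rc: "r \<in> {..<m}" "c \<in> {..<n}"
      have "\<bar>adj_map m n p A z $$ (r, c)\<bar> = \<bar>\<Sum>i<p. z i * A i $$ (r, c)\<bar>"
        using rc by (simp add: adj_map_def)
      also have "\<dots> \<le> (\<Sum>i<p. \<bar>z i * A i $$ (r, c)\<bar>)" by (rule sum_abs)
      also have "\<dots> \<le> (\<Sum>i<p. \<bar>A i $$ (r, c)\<bar>)"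
      proof (intro sum_mono)
        fix i assume "i \<in> {..<p}"
        hence "\<bar>z i\<bar> \<le> 1" using unit_vec_bound[OF z] by auto
        thus "\<bar>z i * A i $$ (r, c)\<bar> \<le> \<bar>A i $$ (r, c)\<bar>"
          by (simp add: abs_mult mult_left_le_one_le)
      qed
      finally show "\<bar>adj_map m n p A z $$ (r, c)\<bar> \<le> (\<Sum>i<p. \<bar>A i $$ (r, c)\<bar>)" .
    qed
    finally show ?thesis .
  qed
  thus "bdd_above {spec_norm (adj_map m n p A y) | y. vnorm p y = 1}"
    by (intro bdd_aboveI[where M = ?B]) blast
qed (use y in blast)

lemma dir_deriv_quad:
  assumes "\<forall>t. 0 < t \<and> t < 1 \<longrightarrow> F (X + t \<cdot>\<^sub>m D) = F X + t * c + t^2 * q"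
  shows "dir_deriv F X D = c"
proof -
  have e1: "eventually (\<lambda>x. x \<in> {0<..<1}) (at_right (0::real))"
    by (rule eventually_at_right_real) simp
  have ev: "eventually (\<lambda>t. c + t * q = (F (X + t \<cdot>\<^sub>m D) - F X) / t) (at_right (0::real))"
    using e1
  proof (rule eventually_mono)
    fix t :: real assume "t \<in> {0<..<1}"
    thus "c + t * q = (F (X + t \<cdot>\<^sub>m D) - F X) / t"
      using assms by (auto simp: field_simps power2_eq_square)
  qed
  have "((\<lambda>t. c + t * q) \<longlongrightarrow> c + 0 * q) (at_right (0::real))"
    by (intro tendsto_intros)
  hence "((\<lambda>t. c + t * q) \<longlongrightarrow> c) (at_right (0::real))" by simp
  hence "((\<lambda>t. (F (X + t \<cdot>\<^sub>m D) - F X) / t) \<longlongrightarrow> c) (at_right (0::real))"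
    using ev by (rule Lim_transform_eventually)
  thus ?thesis unfolding dir_deriv_def
    by (intro tendsto_Lim) (auto simp: trivial_limit_at_right_real)
qed

lemma mat_inner_line:
  assumes "M \<in> carrier_mat m n" "X \<in> carrier_mat m n" "D \<in> carrier_mat m n"
  shows "mat_inner M (X + t \<cdot>\<^sub>m D) = mat_inner M X + t * mat_inner M D"
proof -
  have c: "X + t \<cdot>\<^sub>m D \<in> carrier_mat m n" using assms by auto
  have "mat_inner M (X + t \<cdot>\<^sub>m D) = (\<Sum>c<n. \<Sum>r<m. M $$ (r, c) * X $$ (r, c) + t * (M $$ (r, c) * D $$ (r, c)))"
    using assms by (subst mat_inner_eq[OF assms(1) c]) (auto intro!: sum.cong simp: algebra_simps)
  also have "\<dots> = mat_inner M X + t * mat_inner M D"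
    using assms by (simp add: mat_inner_eq sum.distrib sum_distrib_left)
  finally show ?thesis .
qed

lemma lsq_line:
  assumes A: "\<forall>i<p. A i \<in> carrier_mat m n" and X: "X \<in> carrier_mat m n" and D: "D \<in> carrier_mat m n"
  shows "lsq p A b (X + t \<cdot>\<^sub>m D) = lsq p A b X
     + t * (\<Sum>i<p. (mat_inner (A i) X - b i) * mat_inner (A i) D)
     + t^2 * ((1/2) * (\<Sum>i<p. (mat_inner (A i) D)^2))"
proof -
  have "lsq p A b (X + t \<cdot>\<^sub>m D) = (1/2) * (\<Sum>i<p. (mat_inner (A i) X - b i + t * mat_inner (A i) D)^2)"
  proof -
    have "\<And>i. i < p \<Longrightarrow> mat_inner (A i) (X + t \<cdot>\<^sub>m D) = mat_inner (A i) X + t * mat_inner (A i) D"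
      using A X D mat_inner_line by blast
    thus ?thesis unfolding lsq_def by (auto intro!: sum.cong arg_cong[where f = "\<lambda>x. (1/2) * x"] simp: algebra_simps)
  qed
  also have "\<dots> = (1/2) * (\<Sum>i<p. (mat_inner (A i) X - b i)^2 + 2 * t * ((mat_inner (A i) X - b i) * mat_inner (A i) D)
      + t^2 * (mat_inner (A i) D)^2)"
    by (intro arg_cong[where f = "\<lambda>x. (1/2) * x"] sum.cong refl) (simp add: power2_eq_square algebra_simps)
  also have "\<dots> = (1/2) * ((\<Sum>i<p. (mat_inner (A i) X - b i)^2) + 2 * t * (\<Sum>i<p. (mat_inner (A i) X - b i) * mat_inner (A i) D)
      + t^2 * (\<Sum>i<p. (mat_inner (A i) D)^2))"
    by (simp only: sum.distrib sum_distrib_left)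
  also have "\<dots> = lsq p A b X
     + t * (\<Sum>i<p. (mat_inner (A i) X - b i) * mat_inner (A i) D)
     + t^2 * ((1/2) * (\<Sum>i<p. (mat_inner (A i) D)^2))"
    unfolding lsq_def by (simp add: algebra_simps)
  finally show ?thesis .
qed

lemma col_unit:
  assumes "orthogonal_mat m U" "k < m"
  shows "vnorm m (\<lambda>r. U $$ (r, k)) = 1"
proof -
  note U = orth_facts[OF assms(1)]
  have "(transpose_mat U * U) $$ (k, k) = 1" using U assms by simp
  moreover have "(transpose_mat U * U) $$ (k, k) = (\<Sum>r<m. U $$ (r, k) * U $$ (r, k))"
    using U(1) assms by (simp add: scalar_prod_def lessThan_atLeast0)
  ultimately have "(\<Sum>r<m. U $$ (r, k) * U $$ (r, k)) = 1" by simp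
  thus ?thesis unfolding vnorm_def by (simp add: power2_eq_square)
qed

lemma col_unitV:
  assumes "orthogonal_mat n V" "k < n"
  shows "vnorm n (\<lambda>c. V $$ (c, k)) = 1"
  using col_unit[OF assms] .

lemma swap3a: "(\<Sum>a\<in>A. \<Sum>b\<in>B. \<Sum>c\<in>C. f a b c) = (\<Sum>b\<in>B. \<Sum>c\<in>C. \<Sum>a\<in>A. f a b c)"
proof -
  have "(\<Sum>a\<in>A. \<Sum>b\<in>B. \<Sum>c\<in>C. f a b c) = (\<Sum>b\<in>B. \<Sum>a\<in>A. \<Sum>c\<in>C. f a b c)" by (rule sum.swap)
  also have "\<dots> = (\<Sum>b\<in>B. \<Sum>c\<in>C. \<Sum>a\<in>A. f a b c)" by (rule sum.cong[OF refl], rule sum.swap)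
  finally show ?thesis .
qed

lemma rev3: "(\<Sum>a\<in>A. \<Sum>b\<in>B. \<Sum>c\<in>C. f a b c) = (\<Sum>c\<in>C. \<Sum>b\<in>B. \<Sum>a\<in>A. f a b c)"
proof -
  have "(\<Sum>a\<in>A. \<Sum>b\<in>B. \<Sum>c\<in>C. f a b c) = (\<Sum>a\<in>A. \<Sum>c\<in>C. \<Sum>b\<in>B. f a b c)"
    by (rule sum.cong[OF refl], rule sum.swap)
  also have "\<dots> = (\<Sum>c\<in>C. \<Sum>a\<in>A. \<Sum>b\<in>B. f a b c)" by (rule sum.swap)
  also have "\<dots> = (\<Sum>c\<in>C. \<Sum>b\<in>B. \<Sum>a\<in>A. f a b c)" by (rule sum.cong[OF refl], rule sum.swap)
  finally show ?thesis .
qed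

lemma key_bound:
  assumes A: "\<forall>i<p. A i \<in> carrier_mat m n" and n: "0 < n"
    and Uo: "orthogonal_mat m U" and Vo: "orthogonal_mat n V" and mn: "m \<le> n"
    and tn: "\<forall>k<m. 0 \<le> \<tau> k"
  shows "\<bar>\<Sum>i<p. e i * mat_inner (A i) (U * rect_diag m n \<tau> * transpose_mat V)\<bar>
     \<le> vnorm p e * adj_norm m n p A * (\<Sum>k<m. \<tau> k)"
proof -
  note U = orth_facts[OF Uo] and V = orth_facts[OF Vo]
  define Y where "Y = U * rect_diag m n \<tau> * transpose_mat V"
  have Y: "Y \<in> carrier_mat m n" unfolding Y_def using U V by auto
  define \<nu> where "\<nu> = vnorm p e"
  have \<nu>0: "0 \<le> \<nu>" unfolding \<nu>_def vnorm_def by (simp add: sum_nonneg)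
  show ?thesis
  proof (cases "\<nu> = 0")
    case True
    hence "(\<Sum>i<p. (e i)^2) = 0" unfolding \<nu>_def vnorm_def by simp
    hence "\<forall>i\<in>{..<p}. (e i)^2 = 0" by (subst sum_nonneg_eq_0_iff[symmetric]) auto
    hence "\<forall>i<p. e i = 0" by simp
    thus ?thesis using True unfolding \<nu>_def[symmetric] Y_def[symmetric] by simp
  next
    case False
    hence \<nu>p: "0 < \<nu>" using \<nu>0 by simp
    define y where "y i = inverse \<nu> * e i" for i
    have yn: "vnorm p y = 1"
    proof -
      have "vnorm p y = inverse \<nu> * vnorm p e" unfolding vnorm_L2 y_def
        by (rule L2_set_right_distrib[symmetric]) (use \<nu>0 in simp)
      thus ?thesis using \<nu>p unfolding \<nu>_def by simp
    qed
    define G where "G = adj_map m n p A y"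
    have Gd: "dim_row G = m" "dim_col G = n" by (auto simp: G_def adj_map_def)
    have S1: "(\<Sum>i<p. e i * mat_inner (A i) Y) = \<nu> * (\<Sum>i<p. y i * mat_inner (A i) Y)"
      unfolding sum_distrib_left y_def using \<nu>p by (intro sum.cong refl) simp
    have S2: "(\<Sum>i<p. y i * mat_inner (A i) Y) = (\<Sum>c<n. \<Sum>r<m. G $$ (r, c) * Y $$ (r, c))"
    proof -
      have "(\<Sum>i<p. y i * mat_inner (A i) Y) = (\<Sum>i<p. \<Sum>c<n. \<Sum>r<m. y i * A i $$ (r, c) * Y $$ (r, c))"
      proof (intro sum.cong refl)
        fix i assume "i \<in> {..<p}"
        hence Ai: "A i \<in> carrier_mat m n" using A by auto
        show "y i * mat_inner (A i) Y = (\<Sum>c<n. \<Sum>r<m. y i * A i $$ (r, c) * Y $$ (r, c))"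
          using Ai Y by (simp add: mat_inner_eq[OF Ai Y] sum_distrib_left mult.assoc)
      qed
      also have "\<dots> = (\<Sum>c<n. \<Sum>r<m. \<Sum>i<p. y i * A i $$ (r, c) * Y $$ (r, c))" by (rule swap3a)
      also have "\<dots> = (\<Sum>c<n. \<Sum>r<m. G $$ (r, c) * Y $$ (r, c))"
        by (intro sum.cong refl) (simp add: G_def adj_map_def sum_distrib_right)
      finally show ?thesis .
    qed
    define w where "w k = (\<lambda>r. \<Sum>c<dim_col G. G $$ (r, c) * V $$ (c, k))" for k
    have S3: "(\<Sum>c<n. \<Sum>r<m. G $$ (r, c) * Y $$ (r, c)) = (\<Sum>k<m. \<tau> k * (\<Sum>r<m. U $$ (r, k) * w k r))"
    proof -
      have "(\<Sum>c<n. \<Sum>r<m. G $$ (r, c) * Y $$ (r, c)) = (\<Sum>c<n. \<Sum>r<m. \<Sum>k<m. G $$ (r, c) * (U $$ (r, k) * \<tau> k * V $$ (c, k)))"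
        unfolding Y_def by (intro sum.cong refl) (simp add: svd_entry[OF U(1) V(1) mn] sum_distrib_left del: index_mult_mat)
      also have "\<dots> = (\<Sum>k<m. \<Sum>r<m. \<Sum>c<n. G $$ (r, c) * (U $$ (r, k) * \<tau> k * V $$ (c, k)))" by (rule rev3)
      also have "\<dots> = (\<Sum>k<m. \<tau> k * (\<Sum>r<m. U $$ (r, k) * w k r))"
        unfolding w_def Gd by (intro sum.cong refl) (simp add: sum_distrib_left mult_ac)
      finally show ?thesis .
    qed
    have bk: "\<bar>\<Sum>r<m. U $$ (r, k) * w k r\<bar> \<le> adj_norm m n p A" if k: "k < m" for k
    proof -
      have "\<bar>\<Sum>r<m. U $$ (r, k) * w k r\<bar> \<le> (\<Sum>r<m. \<bar>U $$ (r, k)\<bar> * \<bar>w k r\<bar>)"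
        by (rule order_trans[OF sum_abs]) (simp add: abs_mult)
      also have "\<dots> \<le> vnorm m (\<lambda>r. U $$ (r, k)) * vnorm m (w k)"
        unfolding vnorm_L2 by (rule L2_set_mult_ineq)
      also have "\<dots> = vnorm m (w k)" using col_unit[OF Uo k] by simp
      also have "\<dots> \<le> spec_norm G"
        using spec_norm_upper[of G "\<lambda>c. V $$ (c, k)"] col_unitV[OF Vo] k mn
        unfolding w_def Gd by simp
      also have "\<dots> \<le> adj_norm m n p A" unfolding G_def by (rule adj_norm_upper[OF A n yn])
      finally show ?thesis .
    qed
    have "\<bar>\<Sum>k<m. \<tau> k * (\<Sum>r<m. U $$ (r, k) * w k r)\<bar> \<le> (\<Sum>k<m. \<tau> k * adj_norm m n p A)"
    proof (rule order_trans[OF sum_abs], intro sum_mono)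
      fix k assume "k \<in> {..<m}"
      thus "\<bar>\<tau> k * (\<Sum>r<m. U $$ (r, k) * w k r)\<bar> \<le> \<tau> k * adj_norm m n p A"
        using bk tn by (simp add: abs_mult mult_left_mono)
    qed
    hence "\<bar>\<Sum>i<p. y i * mat_inner (A i) Y\<bar> \<le> adj_norm m n p A * (\<Sum>k<m. \<tau> k)"
      unfolding S2 S3 by (simp add: sum_distrib_right mult.commute)
    hence "\<nu> * \<bar>\<Sum>i<p. y i * mat_inner (A i) Y\<bar> \<le> \<nu> * (adj_norm m n p A * (\<Sum>k<m. \<tau> k))"
      using \<nu>0 by (intro mult_left_mono)
    thus ?thesis unfolding Y_def[symmetric] S1 \<nu>_def[symmetric] using \<nu>0
      by (simp add: abs_mult mult.assoc)
  qed
qed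

lemma mat_inner_uminus:
  assumes "M \<in> carrier_mat m n" "Y \<in> carrier_mat m n"
  shows "mat_inner M (- Y) = - mat_inner M Y"
proof -
  have "- Y \<in> carrier_mat m n" using assms by auto
  thus ?thesis using assms by (simp add: mat_inner_eq sum_negf[symmetric])
qed

theorem mainTheorem17:
  fixes m n K p :: nat and \<gamma> :: real and C :: "real mat set"
    and A :: "nat \<Rightarrow> real mat" and b :: "nat \<Rightarrow> real" and Xs :: "real mat"
  assumes "m \<le> n" and "K < m" and "0 < \<gamma>"
    and "C \<subseteq> carrier_mat m n"
    and "cond_C1 K C"
    and "\<forall>X\<in>C. - X \<in> feasible_cone X C"
    and "\<forall>i<p. A i \<in> carrier_mat m n"
    and "\<gamma> > adj_norm m n p A * vnorm p b"
    and "d_stationary (\<lambda>X. lsq p A b X + \<gamma> * trunc_sv K X) C Xs"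
  shows "trunc_sv K Xs = 0"
proof -
  note mn = assms(1) and Km = assms(2) and g0 = assms(3) and A = assms(7) and gam = assms(8)
  define F where "F = (\<lambda>X. lsq p A b X + \<gamma> * trunc_sv K X)"
  have XC: "Xs \<in> C" and stat: "\<forall>D\<in>feasible_cone Xs C. 0 \<le> dir_deriv F Xs D"
    using assms(9) unfolding d_stationary_def F_def by auto
  have Xc: "Xs \<in> carrier_mat m n" using XC assms(4) by auto
  hence dims: "dim_row Xs = m" "dim_col Xs = n" by auto
  have n0: "0 < n" using mn Km by simp
  define \<sigma> where "\<sigma> = svals Xs"
  define \<tau> where "\<tau> = (\<lambda>i. if K \<le> i then \<sigma> i else 0)"
  obtain U V where svd: "is_svd Xs U \<sigma> V"
    and D1f: "- (U * rect_diag m n \<tau> * transpose_mat V) \<in> feasible_cone Xs C"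
  proof -
    have "\<exists>U V. is_svd Xs U (svals Xs) V \<and> - (U * rect_diag (dim_row Xs) (dim_col Xs)
       (\<lambda>i. if K \<le> i then svals Xs i else 0) * transpose_mat V) \<in> feasible_cone Xs C"
      using assms(5) XC unfolding cond_C1_def by blast
    note this[unfolded dims \<sigma>_def[symmetric]]
    note this[unfolded \<tau>_def[symmetric]]
    thus thesis using that by blast
  qed
  have D2f: "- Xs \<in> feasible_cone Xs C" using assms(6) XC by blast
  note props = svd_props[OF svd Xc mn]
  have nn: "\<forall>i<m. 0 \<le> \<sigma> i" and dec: "\<forall>i j. i \<le> j \<longrightarrow> j < m \<longrightarrow> \<sigma> j \<le> \<sigma> i"
    and z: "\<forall>i\<ge>m. \<sigma> i = 0" and Uo: "orthogonal_mat m U" and Vo: "orthogonal_mat n V"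
    and Xeq: "Xs = U * rect_diag m n \<sigma> * transpose_mat V"
    using props by auto
  note U = orth_facts[OF Uo] and V = orth_facts[OF Vo]
  define M where "M a = U * rect_diag m n a * transpose_mat V" for a
  have Mc: "M a \<in> carrier_mat m n" for a unfolding M_def using U V by auto
  have Ment: "M a $$ (r, c) = (\<Sum>k<m. U $$ (r, k) * a k * V $$ (c, k))" if "r < m" "c < n" for a r c
    unfolding M_def using svd_entry[OF U(1) V(1) mn that] .
  have trM: "trunc_sv K (M a) = (\<Sum>i\<in>{K..<m}. a i)"
    if "\<forall>i<m. 0 \<le> a i" "\<forall>i j. i \<le> j \<longrightarrow> j < m \<longrightarrow> a j \<le> a i" "\<forall>i\<ge>m. a i = 0" for a
  proof -
    have "is_svd (M a) U a V" unfolding M_def by (rule svd_is_svd[OF Uo Vo mn that])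
    hence "svals (M a) = a" using svals_eq Mc mn by blast
    moreover have "dim_row (M a) = m" "dim_col (M a) = n" using Mc by auto
    ultimately show ?thesis unfolding trunc_sv_def using mn by simp
  qed
  define T where "T = trunc_sv K Xs"
  have T: "T = (\<Sum>i\<in>{K..<m}. \<sigma> i)" unfolding T_def trunc_sv_def \<sigma>_def dims using mn by simp
  have T0: "0 \<le> T" unfolding T using nn by (intro sum_nonneg) auto
  have Tt: "(\<Sum>k<m. \<tau> k) = T"
  proof -
    have "(\<Sum>k<m. \<tau> k) = (\<Sum>k\<in>{k\<in>{..<m}. K \<le> k}. \<sigma> k)"
      unfolding \<tau>_def by (rule sum.inter_filter[symmetric]) simp
    also have "{k\<in>{..<m}. K \<le> k} = {K..<m}" by auto
    finally show ?thesis unfolding T .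
  qed
  have XM: "Xs = M \<sigma>" unfolding M_def by (rule Xeq)
  have FX: "F Xs = lsq p A b Xs + \<gamma> * T" unfolding F_def T_def ..
  define Y where "Y = M \<tau>"
  have Yc: "Y \<in> carrier_mat m n" unfolding Y_def by (rule Mc)
  have D1c: "- Y \<in> carrier_mat m n" using Yc by auto
  have h1: "0 \<le> (\<Sum>i<p. (mat_inner (A i) Xs - b i) * mat_inner (A i) (- Y)) - \<gamma> * T"
  proof -
    have "dir_deriv F Xs (- Y) = (\<Sum>i<p. (mat_inner (A i) Xs - b i) * mat_inner (A i) (- Y)) - \<gamma> * T"
    proof (rule dir_deriv_quad, intro allI impI)
      fix t :: real assume t: "0 < t \<and> t < 1"
      define a where "a i = (if K \<le> i then (1 - t) * \<sigma> i else \<sigma> i)" for i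
      have eq: "Xs + t \<cdot>\<^sub>m (- Y) = M a"
      proof (rule eq_matI)
        show "dim_row (Xs + t \<cdot>\<^sub>m (- Y)) = dim_row (M a)" "dim_col (Xs + t \<cdot>\<^sub>m (- Y)) = dim_col (M a)"
          using Mc[of a] Yc Xc by auto
        fix r c assume rc: "r < dim_row (M a)" "c < dim_col (M a)"
        hence rc': "r < m" "c < n" using Mc[of a] by auto
        have "(Xs + t \<cdot>\<^sub>m (- Y)) $$ (r, c) = M \<sigma> $$ (r, c) - t * M \<tau> $$ (r, c)"
          using rc' Yc Xc unfolding XM[symmetric] Y_def[symmetric] by simp
        also have "\<dots> = (\<Sum>k<m. U $$ (r, k) * \<sigma> k * V $$ (c, k) - t * (U $$ (r, k) * \<tau> k * V $$ (c, k)))"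
          using rc' by (simp add: Ment sum_subtractf sum_distrib_left)
        also have "\<dots> = M a $$ (r, c)"
          using rc' by (simp add: Ment a_def \<tau>_def algebra_simps) (intro sum.cong, auto simp: algebra_simps)
        finally show "(Xs + t \<cdot>\<^sub>m (- Y)) $$ (r, c) = M a $$ (r, c)" .
      qed
      have a1: "\<forall>i<m. 0 \<le> a i" using nn t unfolding a_def by auto
      have a2: "\<forall>i j. i \<le> j \<longrightarrow> j < m \<longrightarrow> a j \<le> a i"
      proof (intro allI impI)
        fix i j assume ij: "i \<le> j" "j < m"
        hence s: "\<sigma> j \<le> \<sigma> i" "0 \<le> \<sigma> j" using dec nn by auto
        have "(1 - t) * \<sigma> j \<le> \<sigma> j" using s t by (simp add: mult_left_le_one_le)
        moreover have "(1 - t) * \<sigma> j \<le> (1 - t) * \<sigma> i" using s t by (intro mult_left_mono) auto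
        ultimately show "a j \<le> a i" using s ij unfolding a_def by auto
      qed
      have a3: "\<forall>i\<ge>m. a i = 0" using z unfolding a_def by auto
      have trt: "trunc_sv K (Xs + t \<cdot>\<^sub>m (- Y)) = (1 - t) * T"
        unfolding eq trM[OF a1 a2 a3] T sum_distrib_left a_def by (intro sum.cong) auto
      show "F (Xs + t \<cdot>\<^sub>m (- Y)) = F Xs + t * ((\<Sum>i<p. (mat_inner (A i) Xs - b i) * mat_inner (A i) (- Y)) - \<gamma> * T)
          + t^2 * ((1/2) * (\<Sum>i<p. (mat_inner (A i) (- Y))^2))"
        unfolding FX unfolding F_def trt lsq_line[OF A Xc D1c] by (simp add: algebra_simps)
    qed
    thus ?thesis using stat D1f unfolding Y_def M_def by auto
  qed
  have D2c: "- Xs \<in> carrier_mat m n" using Xc by auto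
  have h2: "0 \<le> (\<Sum>i<p. (mat_inner (A i) Xs - b i) * mat_inner (A i) (- Xs)) - \<gamma> * T"
  proof -
    have "dir_deriv F Xs (- Xs) = (\<Sum>i<p. (mat_inner (A i) Xs - b i) * mat_inner (A i) (- Xs)) - \<gamma> * T"
    proof (rule dir_deriv_quad, intro allI impI)
      fix t :: real assume t: "0 < t \<and> t < 1"
      define a where "a i = (1 - t) * \<sigma> i" for i
      have eq: "Xs + t \<cdot>\<^sub>m (- Xs) = M a"
      proof (rule eq_matI)
        show "dim_row (Xs + t \<cdot>\<^sub>m (- Xs)) = dim_row (M a)" "dim_col (Xs + t \<cdot>\<^sub>m (- Xs)) = dim_col (M a)"
          using Mc[of a] Xc by auto
        fix r c assume rc: "r < dim_row (M a)" "c < dim_col (M a)"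
        hence rc': "r < m" "c < n" using Mc[of a] by auto
        have "(Xs + t \<cdot>\<^sub>m (- Xs)) $$ (r, c) = (1 - t) * M \<sigma> $$ (r, c)"
          using rc' Xc unfolding XM[symmetric] by (simp add: algebra_simps)
        also have "\<dots> = M a $$ (r, c)"
          using rc' by (simp add: Ment a_def sum_distrib_left mult_ac)
        finally show "(Xs + t \<cdot>\<^sub>m (- Xs)) $$ (r, c) = M a $$ (r, c)" .
      qed
      have a1: "\<forall>i<m. 0 \<le> a i" using nn t unfolding a_def by auto
      have a2: "\<forall>i j. i \<le> j \<longrightarrow> j < m \<longrightarrow> a j \<le> a i"
        using dec t unfolding a_def by (auto intro!: mult_left_mono)
      have a3: "\<forall>i\<ge>m. a i = 0" using z unfolding a_def by auto
      have trt: "trunc_sv K (Xs + t \<cdot>\<^sub>m (- Xs)) = (1 - t) * T"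
        unfolding eq trM[OF a1 a2 a3] T sum_distrib_left a_def ..
      show "F (Xs + t \<cdot>\<^sub>m (- Xs)) = F Xs + t * ((\<Sum>i<p. (mat_inner (A i) Xs - b i) * mat_inner (A i) (- Xs)) - \<gamma> * T)
          + t^2 * ((1/2) * (\<Sum>i<p. (mat_inner (A i) (- Xs))^2))"
        unfolding FX unfolding F_def trt lsq_line[OF A Xc D2c] by (simp add: algebra_simps)
    qed
    thus ?thesis using stat D2f by auto
  qed
  define e where "e i = mat_inner (A i) Xs - b i" for i
  define a where "a i = mat_inner (A i) Xs" for i
  have inY: "\<And>i. i < p \<Longrightarrow> mat_inner (A i) (- Y) = - mat_inner (A i) Y"
    using A Yc mat_inner_uminus by blast
  have inX: "\<And>i. i < p \<Longrightarrow> mat_inner (A i) (- Xs) = - a i"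
    unfolding a_def using A Xc mat_inner_uminus by blast
  have h1': "\<gamma> * T \<le> - (\<Sum>i<p. e i * mat_inner (A i) Y)"
    using h1 inY unfolding e_def by (simp add: sum_negf)
  have h2': "(\<Sum>i<p. e i * a i) \<le> - (\<gamma> * T)"
    using h2 inX unfolding e_def a_def[symmetric] by (simp add: sum_negf)
  have kb: "\<bar>\<Sum>i<p. e i * mat_inner (A i) Y\<bar> \<le> vnorm p e * adj_norm m n p A * T"
  proof -
    have tn: "\<forall>k<m. 0 \<le> \<tau> k" using nn unfolding \<tau>_def by auto
    show ?thesis using key_bound[OF A n0 Uo Vo mn tn, of e] unfolding Y_def M_def Tt .
  qed
  have ee: "(\<Sum>i<p. (e i)^2) \<le> (\<Sum>i<p. (b i)^2)"
  proof -
    have gT: "0 \<le> \<gamma> * T" using g0 T0 by simp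
    have s1: "(\<Sum>i<p. (e i)^2) = (\<Sum>i<p. (a i)^2) - 2 * (\<Sum>i<p. a i * b i) + (\<Sum>i<p. (b i)^2)"
      unfolding e_def a_def[symmetric]
      by (simp add: power2_eq_square algebra_simps sum.distrib sum_subtractf sum_distrib_left)
    have s2: "(\<Sum>i<p. e i * a i) = (\<Sum>i<p. (a i)^2) - (\<Sum>i<p. a i * b i)"
      unfolding e_def a_def[symmetric]
      by (simp add: power2_eq_square algebra_simps sum_subtractf)
    have s3: "0 \<le> (\<Sum>i<p. (a i)^2)" by (simp add: sum_nonneg)
    show ?thesis using s1 s2 s3 h2' gT by linarith
  qed
  have ve: "vnorm p e \<le> vnorm p b" unfolding vnorm_def using ee by (rule real_sqrt_le_mono)
  have ve0: "0 \<le> vnorm p e" unfolding vnorm_def by (simp add: sum_nonneg)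
  have main: "\<gamma> * T \<le> vnorm p e * adj_norm m n p A * T" using h1' kb by linarith
  show ?thesis
  proof (rule ccontr)
    assume "trunc_sv K Xs \<noteq> 0"
    hence Tp: "0 < T" using T0 unfolding T_def by simp
    have "\<gamma> \<le> vnorm p e * adj_norm m n p A" using main Tp by simp
    moreover have "vnorm p e * adj_norm m n p A < \<gamma>"
    proof (cases "adj_norm m n p A \<le> 0")
      case True
      hence "vnorm p e * adj_norm m n p A \<le> 0" using ve0 by (simp add: mult_nonneg_nonpos)
      thus ?thesis using g0 by simp
    next
      case False
      hence "vnorm p e * adj_norm m n p A \<le> vnorm p b * adj_norm m n p A" using ve by (intro mult_right_mono) auto
      thus ?thesis using gam by (simp add: mult.commute)
    qed
    ultimately show False by simp
  qed
qed

end
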